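(* Suppose $\mathcal{G}_k$ is bidirectional for every $k$ and $\{\mathcal{G}_k\}$ is infinitely jointly connected. Consider an algorithm in $\mathcal{A}_{\rm ave}$ for which there is a constant $\alpha_*\in(0,1)$ such that either $\alpha_k\ge\alpha_*$ for all $k$, or $1-\alpha_k-\eta_k\ge\alpha_*$ for all $k$. Then the algorithm achieves global asymptotic consensus.
   Context: Network of nodes $\mathcal{V}=\{1,\dots,n\}$, $n\ge 3$, discrete time, states $x_i(k)\in\mathbb{R}$. At each time $k$ a digraph $\mathcal{G}_k=(\mathcal{V},\mathcal{E}_k)$ is given; $j$ is a neighbor of $i$ at time $k$ if $(j,i)\in\mathcal{E}_k$, every node is always its own neighbor; $\mathcal{N}_i(k)$ is the neighbor set. The algorithm is $$x_i(k+1)=\eta_k x_i(k)+\alpha_k\min_{j\in\mathcal{N}_i(k)}x_j(k)+(1-\eta_k-\alpha_k)\max_{j\in\mathcal{N}_i(k)}x_j(k),$$ with node-independent parameters; $\mathcal{A}_{\rm ave}$ consists of those with $\eta_k\in(0,1]$, $\alpha_k\in[0,1-\eta_k]$ for all $k$. Global asymptotic consensus: for every initial time $k_0\ge0$ and initial value $x(k_0)=x^0\in\mathbb{R}^n$ there is $z_*$ with $x_i(k)\to z_*$ for all $i$. A digraph is bidirectional if $(i,j)\in\mathcal{E}$ iff $(j,i)\in\mathcal{E}$; a bidirectional graph is connected if there is a path between any two nodes. $\mathcal{G}([k,\infty))=(\mathcal{V},\cup_{s\ge k}\mathcal{E}_s)$. A sequence of bidirectional graphs is infinitely jointly connected if $\mathcal{G}([k,\infty))$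 is connected for all $k\ge0$. *)

theory Defs
  imports "HOL-Analysis.Analysis"
begin

(* Nodes are the elements of a finite type 'n; E k is the edge set of G_k;
   (j,i) \<in> E k means j is a neighbor of i at time k. *)

definition neighbors :: "(nat \<Rightarrow> ('n \<times> 'n) set) \<Rightarrow> nat \<Rightarrow> 'n \<Rightarrow> 'n set" where
  "neighbors E k i = {j. (j, i) \<in> E k} \<union> {i}"

definition bidirectional :: "('n \<times> 'n) set \<Rightarrow> bool" where
  "bidirectional Ed \<longleftrightarrow> (\<forall>i j. (i, j) \<in> Ed \<longleftrightarrow> (j, i) \<in> Ed)"

definition connected_graph :: "('n \<times> 'n) set \<Rightarrow> bool" where
  "connected_graph Ed \<longleftrightarrow> (\<forall>i j. (i, j) \<in> Ed\<^sup>*)"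

definition union_graph_from :: "(nat \<Rightarrow> ('n \<times> 'n) set) \<Rightarrow> nat \<Rightarrow> ('n \<times> 'n) set" where
  "union_graph_from E k = (\<Union>s\<in>{k..}. E s)"

definition infinitely_jointly_connected :: "(nat \<Rightarrow> ('n \<times> 'n) set) \<Rightarrow> bool" where
  "infinitely_jointly_connected E \<longleftrightarrow> (\<forall>k. connected_graph (union_graph_from E k))"

definition step :: "(nat \<Rightarrow> ('n \<times> 'n) set) \<Rightarrow> (nat \<Rightarrow> real) \<Rightarrow> (nat \<Rightarrow> real)
                     \<Rightarrow> nat \<Rightarrow> ('n \<Rightarrow> real) \<Rightarrow> ('n \<Rightarrow> real)" where
  "step E \<eta> \<alpha> k x = (\<lambda>i. \<eta> k * x i
       + \<alpha> k * Min (x ` neighbors E k i)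
       + (1 - \<eta> k - \<alpha> k) * Max (x ` neighbors E k i))"

(* trajectory started at time k0 from x0: traj ... m = x(k0 + m) *)
fun traj :: "(nat \<Rightarrow> ('n \<times> 'n) set) \<Rightarrow> (nat \<Rightarrow> real) \<Rightarrow> (nat \<Rightarrow> real)
              \<Rightarrow> nat \<Rightarrow> ('n \<Rightarrow> real) \<Rightarrow> nat \<Rightarrow> ('n \<Rightarrow> real)" where
  "traj E \<eta> \<alpha> k0 x0 0 = x0"
| "traj E \<eta> \<alpha> k0 x0 (Suc m) = step E \<eta> \<alpha> (k0 + m) (traj E \<eta> \<alpha> k0 x0 m)"

definition global_asymptotic_consensus ::
  "(nat \<Rightarrow> ('n::finite \<times> 'n) set) \<Rightarrow> (nat \<Rightarrow> real) \<Rightarrow> (nat \<Rightarrow> real) \<Rightarrow> bool" where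
  "global_asymptotic_consensus E \<eta> \<alpha> \<longleftrightarrow>
     (\<forall>k0 x0. \<exists>z. \<forall>i. (\<lambda>m. traj E \<eta> \<alpha> k0 x0 m i) \<longlonglongrightarrow> z)"

definition in_A_ave :: "(nat \<Rightarrow> real) \<Rightarrow> (nat \<Rightarrow> real) \<Rightarrow> bool" where
  "in_A_ave \<eta> \<alpha> \<longleftrightarrow> (\<forall>k. 0 < \<eta> k \<and> \<eta> k \<le> 1 \<and> 0 \<le> \<alpha> k \<and> \<alpha> k \<le> 1 - \<eta> k)"

end

theory Submission
  imports Defs
begin

lemma funpow_ge:
  fixes c e as :: real
  assumes "0 \<le> c" "0 \<le> e" "0 < as" "as \<le> 1"
  shows "c \<le> ((\<lambda>y. (y+e)/as)^^r) c"
proof (induction r)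
  case 0 then show ?case by simp
next
  case (Suc r)
  let ?y = "((\<lambda>y. (y+e)/as)^^r) c"
  have "?y + e \<le> (?y+e)/as"
    using Suc assms by (simp add: le_divide_eq mult_left_le)
  then show ?case using Suc assms by simp
qed

lemma gap_main:
  fixes u :: "nat \<Rightarrow> 'n::finite \<Rightarrow> real" and N :: "nat \<Rightarrow> 'n \<Rightarrow> 'n set"
  assumes Nsym: "\<And>t i j. j \<in> N t i \<Longrightarrow> i \<in> N t j"
    and Nself: "\<And>t i. i \<in> N t i"
    and U1a: "\<And>t i. \<exists>j\<in>N t i. u t j \<le> u (Suc t) i"
    and U1b: "\<And>t i. \<exists>j\<in>N t i. u (Suc t) i \<le> u t j"
    and U2: "\<And>t i j. K \<le> t \<Longrightarrow> j \<in> N t i \<Longrightarrow> as * u t j - e \<le> u (Suc t) i"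
    and U3: "\<And>t. \<exists>i. u t i \<le> 0"
    and U4: "\<And>t. \<exists>i. D \<le> u t i"
    and U5: "\<And>t A. A \<noteq> {} \<Longrightarrow> A \<noteq> UNIV \<Longrightarrow> \<exists>s\<ge>t. \<exists>a\<in>A. \<exists>b\<in>N s a. b \<notin> A"
    and as: "0 < as" "as \<le> 1" and e: "0 \<le> e" and c: "0 \<le> c" "c < D"
  shows "K \<le> t \<Longrightarrow> card A \<le> r \<Longrightarrow> (\<forall>i\<in>A. u t i \<le> c) \<Longrightarrow> (\<forall>i. i \<notin> A \<longrightarrow> \<theta> < u t i)
     \<Longrightarrow> ((\<lambda>y. (y+e)/as)^^r) c < \<theta> \<Longrightarrow> False"
proof (induction r arbitrary: t A \<theta>)
  case 0
  then have "A = {}" by simp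
  obtain i0 where "u t i0 \<le> 0" using U3 by blast
  moreover have "c < \<theta>" using 0 by simp
  moreover have "\<theta> < u t i0" using 0(4) `A = {}` by simp
  ultimately show False using c by linarith
next
  case (Suc r)
  let ?f = "\<lambda>y. (y+e)/as"
  have "c \<le> (?f^^Suc r) c" using funpow_ge c e as by blast
  then have th: "c < \<theta>" using Suc.prems by linarith
  obtain i0 where i0: "u t i0 \<le> 0" using U3 by blast
  have i0A: "i0 \<in> A" using Suc.prems(4) i0 th c by force
  obtain i1 where i1: "D \<le> u t i1" using U4 by blast
  have i1A: "i1 \<notin> A" using Suc.prems(3) i1 c by force
  define cross where "cross s \<longleftrightarrow> (\<exists>a\<in>A. \<exists>b\<in>N s a. b \<notin> A)" for s
  obtain s1 where s1: "t \<le> s1" "cross s1" using U5[of A t] i0A i1A unfolding cross_def by blast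
  define s0 where "s0 = (LEAST s. t \<le> s \<and> cross s)"
  have s0: "t \<le> s0" "cross s0" using LeastI[of "\<lambda>s. t \<le> s \<and> cross s", OF conjI[OF s1]] s0_def by auto
  have nocross: "\<not> cross s" if "t \<le> s" "s < s0" for s
    using not_less_Least[of s "\<lambda>s. t \<le> s \<and> cross s"] that s0_def by auto
  have persist: "t + d \<le> s0 \<Longrightarrow> (\<forall>i\<in>A. u (t+d) i \<le> c) \<and> (\<forall>i. i \<notin> A \<longrightarrow> \<theta> < u (t+d) i)" for d
  proof (induction d)
    case 0 then show ?case using Suc.prems by simp
  next
    case (Suc d)
    then have IH: "(\<forall>i\<in>A. u (t+d) i \<le> c)" "(\<forall>i. i \<notin> A \<longrightarrow> \<theta> < u (t+d) i)" by auto
    have nc: "\<not> cross (t+d)" using nocross Suc.prems by simp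
    have "u (t + Suc d) i \<le> c" if "i \<in> A" for i
    proof -
      obtain j where j: "j \<in> N (t+d) i" "u (Suc (t+d)) i \<le> u (t+d) j" using U1b by blast
      have "j \<in> A" using nc that j unfolding cross_def by blast
      then show ?thesis using IH j by force
    qed
    moreover have "\<theta> < u (t + Suc d) i" if "i \<notin> A" for i
    proof -
      obtain j where j: "j \<in> N (t+d) i" "u (t+d) j \<le> u (Suc (t+d)) i" using U1a by blast
      have "j \<notin> A" using nc that j Nsym unfolding cross_def by blast
      then show ?thesis using IH j by force
    qed
    ultimately show ?case by blast
  qed
  from persist[of "s0 - t"] s0 have G: "\<forall>i\<in>A. u s0 i \<le> c" "\<forall>i. i \<notin> A \<longrightarrow> \<theta> < u s0 i" by auto
  obtain a b where ab: "a \<in> A" "b \<in> N s0 a" "b \<notin> A" using s0 unfolding cross_def by blast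
  define A' where "A' = {i\<in>A. N s0 i \<subseteq> A}"
  have Ks0: "K \<le> s0" using Suc.prems s0 by linarith
  have "A' \<subset> A" using ab A'_def by blast
  then have "card A' < card A" by (simp add: psubset_card_mono)
  then have cA': "card A' \<le> r" using Suc.prems by linarith
  have g1: "\<forall>i\<in>A'. u (Suc s0) i \<le> c"
  proof
    fix i assume "i \<in> A'"
    obtain j where j: "j \<in> N s0 i" "u (Suc s0) i \<le> u s0 j" using U1b by blast
    have "j \<in> A" using `i \<in> A'` j A'_def by blast
    then show "u (Suc s0) i \<le> c" using G j by force
  qed
  have g2: "\<forall>i. i \<notin> A' \<longrightarrow> as * \<theta> - e < u (Suc s0) i"
  proof (intro allI impI)
    fix i assume "i \<notin> A'"
    then obtain j where j: "j \<in> N s0 i" "j \<notin> A" using A'_def Nself by blast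
    have "\<theta> < u s0 j" using G j by blast
    then have "as * \<theta> < as * u s0 j" using as by simp
    then show "as * \<theta> - e < u (Suc s0) i" using U2[OF Ks0 j(1)] by linarith
  qed
  have "(?f^^Suc r) c = ((?f^^r) c + e)/as" by simp
  then have "((?f^^r) c + e)/as < \<theta>" using Suc.prems by simp
  then have "(?f^^r) c + e < as * \<theta>" using as by (simp add: divide_less_eq mult.commute)
  then have "(?f^^r) c < as * \<theta> - e" by linarith
  then show False using Suc.IH[of "Suc s0" A' "as * \<theta> - e"] Ks0 cA' g1 g2 by auto
qed


lemma conv_bounds:
  fixes h a mn v mx :: real
  assumes "0 \<le> h" "0 \<le> a" "a \<le> 1 - h" "mn \<le> v" "v \<le> mx"
  shows "mn \<le> h * v + a*mn + (1-h-a)*mx" "h * v + a*mn + (1-h-a)*mx \<le> mx"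
proof -
  have "h*mn \<le> h * v" "h * v \<le> h*mx" using assms by (simp_all add: mult_left_mono)
  moreover have "(1-h-a)*mn \<le> (1-h-a)*mx" using assms by (simp add: mult_left_mono)
  moreover have "a*mn \<le> a*mx" using assms by (simp add: mult_left_mono)
  ultimately show "mn \<le> h * v + a*mn + (1-h-a)*mx" "h * v + a*mn + (1-h-a)*mx \<le> mx"
    by (simp_all add: algebra_simps)
qed

lemma conv_caseA:
  fixes h a mn v mx as :: real
  assumes "0 \<le> h" "as \<le> a" "a \<le> 1 - h" "mn \<le> v" "v \<le> mx"
  shows "h * v + a*mn + (1-h-a)*mx \<le> as*mn + (1-as)*mx"
proof -
  have "h * v \<le> h*mx" using assms by (simp add: mult_left_mono)
  moreover have "(a - as)*mn \<le> (a-as)*mx" using assms by (simp add: mult_left_mono)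
  ultimately show ?thesis by (simp add: algebra_simps)
qed

lemma cross_path:
  assumes "(a,b) \<in> R\<^sup>*" "a \<in> A" "b \<notin> A"
  shows "\<exists>p q. (p,q) \<in> R \<and> p \<in> A \<and> q \<notin> A"
  using assms
proof (induction rule: rtrancl_induct)
  case base then show ?case by simp
next
  case (step y z)
  then show ?case by (cases "y \<in> A") auto
qed

lemma traj_Suc:
  "traj E \<eta> \<alpha> k0 x0 (Suc t) i = \<eta> (k0+t) * traj E \<eta> \<alpha> k0 x0 t i
     + \<alpha> (k0+t) * Min (traj E \<eta> \<alpha> k0 x0 t ` neighbors E (k0+t) i)
     + (1 - \<eta> (k0+t) - \<alpha> (k0+t)) * Max (traj E \<eta> \<alpha> k0 x0 t ` neighbors E (k0+t) i)"
  by (simp add: step_def)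

lemma nb_self: "i \<in> neighbors E k i" by (simp add: neighbors_def)

lemma nb_fin: "finite (neighbors E k (i::'n::finite))" by simp

lemma caseA:
  fixes E :: "nat \<Rightarrow> ('n::finite \<times> 'n) set"
    and \<eta> \<alpha> :: "nat \<Rightarrow> real" and as :: real
  assumes bid: "\<forall>k. bidirectional (E k)"
    and ijc: "infinitely_jointly_connected E"
    and ave: "in_A_ave \<eta> \<alpha>"
    and as: "0 < as" "as < 1"
    and aA: "\<forall>k. \<alpha> k \<ge> as"
  shows "\<exists>z. \<forall>i. (\<lambda>m. traj E \<eta> \<alpha> k0 x0 m i) \<longlonglongrightarrow> z"
proof -
  define x where "x = traj E \<eta> \<alpha> k0 x0"
  define N where "N t i = neighbors E (k0+t) i" for t i
  define M where "M t = Max (range (x t))" for t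
  define m where "m t = Min (range (x t))" for t
  have Nfin: "finite (N t i)" for t i by simp
  have Nself: "i \<in> N t i" for t i by (simp add: N_def nb_self)
  have Nne: "N t i \<noteq> {}" for t i using Nself by blast
  have Nsym: "i \<in> N t j" if "j \<in> N t i" for t i j
    using that bid unfolding N_def neighbors_def bidirectional_def by blast
  have xS: "x (Suc t) i = \<eta> (k0+t) * x t i + \<alpha> (k0+t) * Min (x t ` N t i)
     + (1 - \<eta> (k0+t) - \<alpha> (k0+t)) * Max (x t ` N t i)" for t i
    unfolding x_def N_def by (rule traj_Suc)
  have par: "0 \<le> \<eta> (k0+t)" "0 \<le> \<alpha> (k0+t)" "\<alpha> (k0+t) \<le> 1 - \<eta> (k0+t)" for t
    using ave unfolding in_A_ave_def by (auto simp: less_imp_le)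
  have MinN: "Min (x t ` N t i) \<le> x t j" if "j \<in> N t i" for t i j
    using that Nfin by simp
  have MaxN: "x t j \<le> Max (x t ` N t i)" if "j \<in> N t i" for t i j
    using that Nfin by simp
  have bnd: "Min (x t ` N t i) \<le> x (Suc t) i" "x (Suc t) i \<le> Max (x t ` N t i)" for t i
    unfolding xS using conv_bounds[OF par(1) par(2) par(3) MinN[OF Nself] MaxN[OF Nself]] by auto
  have bndA: "x (Suc t) i \<le> as * Min (x t ` N t i) + (1-as) * Max (x t ` N t i)" for t i
    unfolding xS using conv_caseA[OF par(1) _ par(3) MinN[OF Nself] MaxN[OF Nself]] aA by auto
  have xM: "x t i \<le> M t" for t i unfolding M_def by simp
  have xm: "m t \<le> x t i" for t i unfolding m_def by simp
  have Min_ex: "\<exists>j\<in>N t i. x t j = Min (x t ` N t i)" for t i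
  proof -
    have "Min (x t ` N t i) \<in> x t ` N t i" by (rule Min_in) (use Nne[of t i] in auto)
    then show ?thesis by force
  qed
  have Max_ex: "\<exists>j\<in>N t i. x t j = Max (x t ` N t i)" for t i
  proof -
    have "Max (x t ` N t i) \<in> x t ` N t i" by (rule Max_in) (use Nne[of t i] in auto)
    then show ?thesis by force
  qed
  have M_ex: "\<exists>i. x t i = M t" for t
  proof -
    have "Max (range (x t)) \<in> range (x t)" by (rule Max_in) auto
    then show ?thesis unfolding M_def by (metis rangeE)
  qed
  have m_ex: "\<exists>i. x t i = m t" for t
  proof -
    have "Min (range (x t)) \<in> range (x t)" by (rule Min_in) auto
    then show ?thesis unfolding m_def by (metis rangeE)
  qed
  have MaxNM: "Max (x t ` N t i) \<le> M t" for t i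
    using Max_ex[of t i] xM by metis
  have MinNm: "m t \<le> Min (x t ` N t i)" for t i
    using Min_ex[of t i] xm by metis
  have Mdec: "decseq M"
  proof (rule decseq_SucI)
    fix t
    obtain i where "x (Suc t) i = M (Suc t)" using M_ex by blast
    then show "M (Suc t) \<le> M t" using bnd(2)[of t i] MaxNM[of t i] by linarith
  qed
  have minc: "incseq m"
  proof (rule incseq_SucI)
    fix t
    obtain i where "x (Suc t) i = m (Suc t)" using m_ex by blast
    then show "m t \<le> m (Suc t)" using bnd(1)[of t i] MinNm[of t i] by linarith
  qed
  have mM: "m t \<le> M t" for t using xm[of t] xM[of t] order_trans by blast
  have "\<forall>t. m 0 \<le> M t" using mM minc unfolding incseq_def by (meson order_trans zero_le)
  then obtain Ms where Ms: "M \<longlonglongrightarrow> Ms" "\<forall>t. Ms \<le> M t"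
    using decseq_convergent[OF Mdec] by blast
  have "\<forall>t. m t \<le> M 0" using mM Mdec unfolding decseq_def by (meson order_trans zero_le)
  then obtain ms where ms: "m \<longlonglongrightarrow> ms" "\<forall>t. m t \<le> ms"
    using incseq_convergent[OF minc] by blast
  have msMs: "ms \<le> Ms" using LIMSEQ_le[OF ms(1) Ms(1)] mM by blast
  have eq: "ms = Ms"
  proof (rule ccontr)
    assume "ms \<noteq> Ms"
    then have Dpos: "0 < Ms - ms" using msMs by simp
    define D where "D = Ms - ms"
    define n where "n = CARD('n)"
    define g where "g = (\<lambda>y::real. (y+1)/as)"
    define NN where "NN = (n+1)*n"
    define C where "C = (g^^NN) 0"
    have C0: "0 \<le> C" unfolding C_def g_def using funpow_ge[of 0 1 as NN] as by simp
    define e where "e = D / (C+1)"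
    have epos: "0 < e" unfolding e_def D_def using Dpos C0 by simp
    define f where "f = (\<lambda>y::real. (y+e)/as)"
    define F where "F k = (f^^k) 0" for k
    have FC: "F k = e * (g^^k) 0" for k
    proof (induction k)
      case 0 then show ?case by (simp add: F_def)
    next
      case (Suc k)
      then show ?case by (simp add: F_def f_def g_def algebra_simps add_divide_distrib)
    qed
    have F0: "0 \<le> F k" for k unfolding F_def f_def using funpow_ge[of 0 e as k] as epos by simp
    have Fsuc: "F k < F (Suc k)" for k
    proof -
      have "F k + e \<le> (F k + e)/as" using F0[of k] epos as by (simp add: le_divide_eq mult_left_le)
      then show ?thesis using epos by (simp add: F_def f_def)
    qed
    have Fmono: "strict_mono F" using Fsuc by (simp add: strict_mono_Suc_iff)
    have FNN: "F NN < D"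
    proof -
      have "F NN = e * C" using FC C_def by simp
      also have "\<dots> = D * (C / (C+1))" unfolding e_def using C0 by (simp add: field_simps)
      also have "\<dots> < D" using C0 Dpos D_def by (simp add: mult_less_cancel_left1 divide_less_eq)
      finally show ?thesis .
    qed
    obtain K where K: "\<forall>t\<ge>K. norm (M t - Ms) < e"
      using Ms(1) epos unfolding LIMSEQ_iff by blast
    have MK: "M t \<le> Ms + e" if "K \<le> t" for t using K that by fastforce
    define u where "u t i = Ms - x t i" for t i
    have U1a: "\<exists>j\<in>N t i. u t j \<le> u (Suc t) i" for t i
      using Max_ex[of t i] bnd(2)[of t i] unfolding u_def by force
    have U1b: "\<exists>j\<in>N t i. u (Suc t) i \<le> u t j" for t i
      using Min_ex[of t i] bnd(1)[of t i] unfolding u_def by force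
    have U2: "as * u t j - e \<le> u (Suc t) i" if "K \<le> t" "j \<in> N t i" for t i j
    proof -
      have "as * Min (x t ` N t i) \<le> as * x t j" using MinN[OF that(2)] as by simp
      moreover have "(1-as) * Max (x t ` N t i) \<le> (1-as) * (Ms + e)"
        using MaxNM[of t i] MK[OF that(1)] as by (simp add: mult_left_mono)
      ultimately have "x (Suc t) i \<le> as * x t j + (1-as)*(Ms+e)" using bndA[of t i] by linarith
      moreover have "(1-as)*e \<le> e" using as epos by (simp add: mult_left_le_one_le)
      ultimately show ?thesis unfolding u_def by (simp add: algebra_simps)
    qed
    have U3: "\<exists>i. u t i \<le> 0" for t
    proof -
      obtain i where "x t i = M t" using M_ex by blast
      then have "u t i \<le> 0" using Ms(2) unfolding u_def by simp
      then show ?thesis by blast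
    qed
    have U4: "\<exists>i. D \<le> u t i" for t
    proof -
      obtain i where "x t i = m t" using m_ex by blast
      then have "D \<le> u t i" using ms(2) unfolding u_def D_def by simp
      then show ?thesis by blast
    qed
    have U5: "\<exists>s\<ge>t. \<exists>a\<in>A. \<exists>b\<in>N s a. b \<notin> A" if hA: "A \<noteq> {}" "A \<noteq> UNIV" for t A
    proof -
      obtain a b where ab: "a \<in> A" "b \<notin> A" using hA by blast
      have "(a,b) \<in> (union_graph_from E (k0+t))\<^sup>*"
        using ijc unfolding infinitely_jointly_connected_def connected_graph_def by blast
      then obtain p q where pq: "(p,q) \<in> union_graph_from E (k0+t)" "p \<in> A" "q \<notin> A"
        using cross_path ab by metis
      then obtain s' where s': "s' \<ge> k0+t" "(p,q) \<in> E s'" unfolding union_graph_from_def by auto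
      then have "(q,p) \<in> E s'" using bid unfolding bidirectional_def by blast
      then have "q \<in> N (s'-k0) p" using s' unfolding N_def neighbors_def by simp
      then show ?thesis using pq s' by (intro exI[of _ "s'-k0"]) auto
    qed
    define S where "S j = {i. u K i \<le> F ((n+1)*j)}" for j
    have Smono: "S j \<subseteq> S (Suc j)" for j
      unfolding S_def using strict_mono_less_eq[OF Fmono, of "(n+1)*j" "(n+1)*Suc j"]
      by auto
    have S0: "card (S 0) \<ge> 1"
    proof -
      obtain i where "u K i \<le> 0" using U3 by blast
      then have "i \<in> S 0" unfolding S_def F_def by simp
      then show ?thesis by (metis One_nat_def Suc_leI card_gt_0_iff empty_iff finite)
    qed
    have "\<exists>j<n. S j = S (Suc j)"
    proof (rule ccontr)
      assume "\<not> ?thesis"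
      then have lt: "card (S j) < card (S (Suc j))" if "j < n" for j
        using Smono[of j] that by (simp add: psubset_card_mono psubset_eq)
      then have "card (S 0) + j \<le> card (S j)" if "j \<le> n" for j
        using that
      proof (induction j)
        case (Suc j)
        then have "card (S 0) + j \<le> card (S j)" "card (S j) < card (S (Suc j))" using lt by auto
        then show ?case by simp
      qed simp
      then have "1 + n \<le> card (S n)" using S0 by fastforce
      moreover have "card (S n) \<le> n" unfolding n_def by (simp add: card_mono)
      ultimately show False by simp
    qed
    then obtain j where j: "j < n" "S j = S (Suc j)" by blast
    define c where "c = F ((n+1)*j)"
    have c0: "0 \<le> c" using F0 c_def by simp
    have cD: "c < D"
    proof -
      have "(n+1)*j \<le> NN" unfolding NN_def using j by (intro mult_le_mono2) simp
      then have "c \<le> F NN" unfolding c_def using strict_mono_less_eq[OF Fmono] by blast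
      then show ?thesis using FNN by simp
    qed
    have cardA: "card (S j) \<le> n" unfolding n_def by (simp add: card_mono)
    have in1: "\<forall>i\<in>S j. u K i \<le> c" unfolding S_def c_def by simp
    have in2: "\<forall>i. i \<notin> S j \<longrightarrow> F ((n+1)*Suc j) < u K i" using j(2) unfolding S_def by auto
    have "(f^^n) c = F (n + (n+1)*j)" unfolding c_def F_def by (simp add: funpow_add)
    also have "\<dots> < F ((n+1)*Suc j)" using Fmono by (simp add: strict_mono_less)
    finally have "(f^^n) c < F ((n+1)*Suc j)" .
    then have fl: "((\<lambda>y. (y+e)/as)^^n) c < F ((n+1)*Suc j)" unfolding f_def .
    show False
      apply (rule gap_main[of N u K as e D c K "S j" n "F ((n+1)*Suc j)"])
                      apply (erule Nsym)
                     apply (rule Nself)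
                    apply (rule U1a)
                   apply (rule U1b)
                  apply (erule (1) U2)
                 apply (rule U3)
                apply (rule U4)
               apply (erule (1) U5)
      using as epos c0 cD cardA in1 in2 fl by auto
  qed
  have "(\<lambda>t. x t i) \<longlonglongrightarrow> Ms" for i
    by (rule real_tendsto_sandwich[of m "\<lambda>t. x t i" sequentially M]) (use xm xM ms(1) Ms(1) eq in auto)
  then show ?thesis unfolding x_def by blast
qed

lemma traj_neg:
  fixes E :: "nat \<Rightarrow> ('n::finite \<times> 'n) set"
  shows "traj E \<eta> \<alpha> k0 x0 m = (\<lambda>i. - traj E \<eta> (\<lambda>k. 1 - \<eta> k - \<alpha> k) k0 (\<lambda>i. - x0 i) m i)"
proof (induction m)
  case 0 then show ?case by simp
next
  case (Suc m)
  let ?y = "traj E \<eta> (\<lambda>k. 1 - \<eta> k - \<alpha> k) k0 (\<lambda>i. - x0 i) m"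
  let ?x = "traj E \<eta> \<alpha> k0 x0 m"
  have yx: "?y = (\<lambda>i. - ?x i)" unfolding Suc.IH by simp
  show ?case
  proof
    fix i
    let ?S = "neighbors E (k0+m) i"
    have fin: "finite (?x ` ?S)" "?x ` ?S \<noteq> {}" using nb_self[of i E "k0+m"] by auto
    have im: "?y ` ?S = uminus ` (?x ` ?S)" unfolding yx by (rule image_image[symmetric])
    have mn: "Min (?y ` ?S) = - Max (?x ` ?S)" unfolding im by (rule minus_Max_eq_Min[OF fin, symmetric])
    have mx: "Max (?y ` ?S) = - Min (?x ` ?S)" unfolding im by (rule minus_Min_eq_Max[OF fin, symmetric])
    have yi: "?y i = - ?x i" unfolding yx by (rule refl)
    show "traj E \<eta> \<alpha> k0 x0 (Suc m) i = - traj E \<eta> (\<lambda>k. 1 - \<eta> k - \<alpha> k) k0 (\<lambda>i. - x0 i) (Suc m) i"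
      unfolding traj_Suc mn mx yi by (simp add: algebra_simps)
  qed
qed

theorem theorem6:
  fixes E :: "nat \<Rightarrow> ('n::finite \<times> 'n) set"
    and \<eta> \<alpha> :: "nat \<Rightarrow> real" and \<alpha>s :: real
  assumes "CARD('n) \<ge> 3"
    and "\<forall>k. bidirectional (E k)"
    and "infinitely_jointly_connected E"
    and "in_A_ave \<eta> \<alpha>"
    and "0 < \<alpha>s" and "\<alpha>s < 1"
    and "(\<forall>k. \<alpha> k \<ge> \<alpha>s) \<or> (\<forall>k. 1 - \<alpha> k - \<eta> k \<ge> \<alpha>s)"
  shows "global_asymptotic_consensus E \<eta> \<alpha>"
  using assms(7)
proof
  assume "\<forall>k. \<alpha> k \<ge> \<alpha>s"
  then show ?thesis unfolding global_asymptotic_consensus_def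
    using caseA[OF assms(2,3,4,5,6)] by blast
next
  assume h: "\<forall>k. 1 - \<alpha> k - \<eta> k \<ge> \<alpha>s"
  let ?a = "\<lambda>k. 1 - \<eta> k - \<alpha> k"
  have ave: "in_A_ave \<eta> ?a" using assms(4) unfolding in_A_ave_def by auto
  have aa: "\<forall>k. ?a k \<ge> \<alpha>s" using h by (simp add: algebra_simps)
  show ?thesis unfolding global_asymptotic_consensus_def
  proof (intro allI)
    fix k0 x0
    obtain z where z: "\<forall>i. (\<lambda>m. traj E \<eta> ?a k0 (\<lambda>i. - x0 i) m i) \<longlonglongrightarrow> z"
      using caseA[OF assms(2,3) ave assms(5,6) aa] by blast
    have "(\<lambda>m. traj E \<eta> \<alpha> k0 x0 m i) \<longlonglongrightarrow> - z" for i
      unfolding traj_neg[of E \<eta> \<alpha> k0 x0] using tendsto_minus[OF z[rule_format, of i]] by simp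
    then show "\<exists>z. \<forall>i. (\<lambda>m. traj E \<eta> \<alpha> k0 x0 m i) \<longlonglongrightarrow> z" by blast
  qed
qed

end
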